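(* Define $a(n)$ by $\sum_{n\ge1}a(n)q^n=\frac{1}{1+q}\sum_{n=1}^\infty q^{n(3n+1)/2}(1-q^{2n+1})$. Then for every positive integer $n$, $$a(n)=\begin{cases}-(-1)^{n-\lfloor n\rfloor_p}, & \text{if } R(\lfloor n\rfloor_p) \text{ is even and positive},\\ 0, & \text{if } R(\lfloor n\rfloor_p)\text{ is odd and negative},\\ (-1)^{n-\lfloor n\rfloor_p}, & \text{if } R(\lfloor n\rfloor_p)\text{ is odd and positive},\\ -2(-1)^{n-\lfloor n\rfloor_p}, & \text{if } R(\lfloor n\rfloor_p)\text{ is even and negative}.\end{cases}$$
   Context: $\mathcal{P}=\{m(3m+1)/2:m\in\mathbb{Z}\}$ is the set of (generalized) pentagonal numbers; for $n=m(3m+1)/2\in\mathcal{P}$ put $R(n)=m$ (well defined). $\lfloor n\rfloor_p$ is the largest element of $\mathcal{P}$ that is $\le n$. *)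

theory Defs
  imports "HOL-Computational_Algebra.Formal_Power_Series"
begin

definition pent :: "int \<Rightarrow> int" where
  "pent m = m * (3 * m + 1) div 2"

definition pentagonal :: "int set" where
  "pentagonal = range pent"

definition Rp :: "int \<Rightarrow> int" where
  "Rp n = (THE m. pent m = n)"

definition pfloor :: "int \<Rightarrow> int" where
  "pfloor n = Max {p \<in> pentagonal. p \<le> n}"

(* the series  \<Sum>_{k\<ge>1} q^{k(3k+1)/2} (1 - q^{2k+1}) : coefficient of q^j;
   only k \<le> j can contribute since k(3k+1)/2 \<ge> k *)
definition S_fps :: "rat fps" where
  "S_fps = Abs_fps (\<lambda>j. \<Sum>k\<in>{1..int j}.
      (if pent k = int j then 1 else 0) - (if pent k + 2 * k + 1 = int j then 1 else 0))"

definition A_fps :: "rat fps" where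
  "A_fps = inverse (1 + fps_X) * S_fps"

definition a :: "nat \<Rightarrow> rat" where
  "a n = fps_nth A_fps n"

end

theory Submission
  imports Defs
begin

lemma pent2: "2 * pent m = m * (3*m+1)"
proof -
  have "even (m * (3*m+1))" by (cases "even m") auto
  then show ?thesis unfolding pent_def by simp
qed

lemma pent24: "24 * pent m + 1 = (6*m+1)^2"
  using pent2[of m] by (simp add: power2_eq_square algebra_simps)

lemma pent_le_iff: "pent i \<le> pent j \<longleftrightarrow> \<bar>6*i+1\<bar> \<le> \<bar>6*j+1\<bar>"
proof -
  have "pent i \<le> pent j \<longleftrightarrow> (6*i+1)^2 \<le> (6*j+1)^2" using pent24[of i] pent24[of j] by linarith
  also have "\<dots> \<longleftrightarrow> \<bar>6*i+1\<bar> \<le> \<bar>6*j+1\<bar>" by (simp add: abs_le_square_iff)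
  finally show ?thesis .
qed

lemma pent_inj: "pent i = pent j \<longleftrightarrow> i = j"
proof
  assume "pent i = pent j"
  then have "\<bar>6*i+1\<bar> = \<bar>6*j+1\<bar>" using pent_le_iff[of i j] pent_le_iff[of j i] by linarith
  then show "i = j" by (auto simp: abs_if split: if_splits; presburger)
qed simp

lemma pent_nonneg: "pent m \<ge> 0"
  using pent24[of m] by (smt (verit) zero_le_power2)

lemma pent_ge_abs: "m \<noteq> 0 \<Longrightarrow> pent m \<ge> \<bar>m\<bar>"
proof (cases "m > 0")
  case True
  have "m * 2 \<le> m * (3*m+1)" using True by (intro mult_left_mono) auto
  then show ?thesis using True pent2[of m] by linarith
next
  case False
  assume "m \<noteq> 0"
  with False have "(-m) * 2 \<le> (-m) * (-3*m-1)" by (intro mult_left_mono) auto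
  then show ?thesis using False \<open>m \<noteq> 0\<close> pent2[of m] by (simp add: algebra_simps)
qed

lemma pent_neg: "pent k + 2*k + 1 = pent (-k-1)"
  using pent2[of k] pent2[of "-k-1"] by (simp add: algebra_simps)


lemma pent_minus: "pent (-m) = pent m - m"
  using pent2[of m] pent2[of "-m"] by (simp add: algebra_simps)

definition nxt :: "int \<Rightarrow> int" where "nxt m = (if m < 0 then -m else -m-1)"
definition prv :: "int \<Rightarrow> int" where "prv m = (if m > 0 then -m else -m-1)"
definition sg :: "int \<Rightarrow> rat" where "sg d = (if even d then 1 else -1)"
definition cc :: "int \<Rightarrow> rat" where
  "cc m = (if m > 0 then (if even m then -1 else 1) else if m < 0 then (if odd m then 0 else -2) else 0)"

lemma pent_lt_iff: "pent i < pent j \<longleftrightarrow> \<bar>6*i+1\<bar> < \<bar>6*j+1\<bar>"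
  using pent_le_iff[of j i] by linarith

lemma gap_abs: "\<bar>6*m+1\<bar> < \<bar>6*j+1\<bar> \<Longrightarrow> \<bar>6*(if m < 0 then -m else -m-1)+1\<bar> \<le> \<bar>(6*j+1::int)\<bar>"
proof (cases "m < 0"; cases "j < 0")
  assume "m < 0" "j < 0" "\<bar>6*m+1\<bar> < \<bar>6*j+1\<bar>"
  then have "-6*m-1 < -6*j-1" by simp
  then have "-m+1 \<le> -j" by linarith
  then show ?thesis using \<open>m<0\<close> \<open>j<0\<close> by simp
next
  assume "m < 0" "\<not> j < 0" "\<bar>6*m+1\<bar> < \<bar>6*j+1\<bar>"
  then have "-6*m-1 < 6*j+1" by simp
  then have "-m \<le> j" by linarith
  then show ?thesis using \<open>m<0\<close> \<open>\<not>j<0\<close> by simp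
next
  assume "\<not> m < 0" "j < 0" "\<bar>6*m+1\<bar> < \<bar>6*j+1\<bar>"
  then have "6*m+1 < -6*j-1" by simp
  then have "m+1 \<le> -j" by linarith
  then show ?thesis using \<open>\<not>m<0\<close> \<open>j<0\<close> by simp
next
  assume "\<not> m < 0" "\<not> j < 0" "\<bar>6*m+1\<bar> < \<bar>6*j+1\<bar>"
  then have "6*m+1 < 6*j+1" by simp
  then have "m+1 \<le> j" by linarith
  then show ?thesis using \<open>\<not>m<0\<close> \<open>\<not>j<0\<close> by simp
qed

lemma gap: "pent m < pent j \<Longrightarrow> pent (nxt m) \<le> pent j"
  unfolding pent_lt_iff pent_le_iff nxt_def by (rule gap_abs)

lemma nxt_gt: "pent m < pent (nxt m)"
  unfolding pent_lt_iff nxt_def by (simp add: abs_if)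

lemma block: "\<exists>m. pent m \<le> int x \<and> int x < pent (nxt m)"
proof (induction x)
  case 0
  have "pent 0 = 0" "pent (nxt 0) = 1" by (simp_all add: pent_def nxt_def)
  then show ?case by (intro exI[of _ 0]) simp
next
  case (Suc x)
  then obtain m where m: "pent m \<le> int x" "int x < pent (nxt m)" by blast
  show ?case
  proof (cases "int (Suc x) < pent (nxt m)")
    case True then show ?thesis using m by (intro exI[of _ m]) simp
  next
    case False then show ?thesis using m nxt_gt[of "nxt m"] by (intro exI[of _ "nxt m"]) simp
  qed
qed

lemma pfloor_block: assumes "pent m \<le> x" "x < pent (nxt m)" shows "pfloor x = pent m"
proof -
  have sub: "{p \<in> pentagonal. p \<le> x} \<subseteq> {0..x}" using pent_nonneg by (auto simp: pentagonal_def)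
  have fin: "finite {p \<in> pentagonal. p \<le> x}" by (rule finite_subset[OF sub]) simp
  show ?thesis unfolding pfloor_def
  proof (rule Max_eqI[OF fin])
    fix y assume "y \<in> {p \<in> pentagonal. p \<le> x}"
    then obtain j where "y = pent j" "pent j \<le> x" by (auto simp: pentagonal_def)
    then show "y \<le> pent m" using gap[of m j] assms by force
  next
    show "pent m \<in> {p \<in> pentagonal. p \<le> x}" using assms by (auto simp: pentagonal_def)
  qed
qed

lemma Rp_pent: "Rp (pent m) = m"
  unfolding Rp_def using pent_inj by auto

lemma S_pent: "fps_nth S_fps (nat (pent m)) = (if m > 0 then 1 else if m < -1 then -1 else 0)"
proof -
  have e: "\<And>k. pent k + 2 * k + 1 = pent m \<longleftrightarrow> k = -m-1"
    unfolding pent_neg pent_inj by arith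
  have "fps_nth S_fps (nat (pent m)) = (\<Sum>k\<in>{1..pent m}. (if k = m then 1 else 0) - (if k = -m-1 then (1::rat) else 0))"
    unfolding S_fps_def using pent_nonneg[of m] by (simp add: pent_inj e)
  also have "\<dots> = (if m > 0 then 1 else if m < -1 then -1 else 0)"
    using pent_ge_abs[of m] by (simp add: sum_subtractf) arith
  finally show ?thesis .
qed

lemma S_nonpent: assumes "\<forall>m. pent m \<noteq> int j" shows "fps_nth S_fps j = 0"
proof -
  have "pent k + 2 * k + 1 \<noteq> int j" for k using assms pent_neg by metis
  then show ?thesis unfolding S_fps_def using assms by simp
qed

lemma rec: "a (Suc n) + a n = fps_nth S_fps (Suc n)" and a0: "a 0 = 0"
proof -
  have "(1 + fps_X) * A_fps = S_fps"
  proof -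
    have "(1 + fps_X) * inverse (1 + fps_X) = (1 :: rat fps)" by (rule inverse_mult_eq_1') simp
    then show ?thesis unfolding A_fps_def by (simp only: mult.assoc[symmetric] mult_1)
  qed
  then have eq: "A_fps + fps_X * A_fps = S_fps" by (simp add: distrib_right)
  show "a (Suc n) + a n = fps_nth S_fps (Suc n)"
    unfolding a_def eq[symmetric] by simp
  have "fps_nth S_fps 0 = 0" unfolding S_fps_def by simp
  then show "a 0 = 0" unfolding a_def eq[symmetric] by simp
qed


lemma sg_succ: "sg (d + 1) = - sg d" unfolding sg_def by simp

lemma main: "pent m \<le> int n \<Longrightarrow> int n < pent (nxt m) \<Longrightarrow> a n = cc m * sg (int n - pent m)"
proof (induction n arbitrary: m)
  case 0
  then have "pent m = 0" using pent_nonneg[of m] by simp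
  then have "m = 0" using pent_inj[of m 0] by (simp add: pent_def)
  then show ?case by (simp add: a0 cc_def)
next
  case (Suc n)
  show ?case
  proof (cases "pent m \<le> int n")
    case True
    have IH: "a n = cc m * sg (int n - pent m)" using Suc True by simp
    have "\<forall>j. pent j \<noteq> int (Suc n)"
    proof
      fix j show "pent j \<noteq> int (Suc n)"
      proof
        assume "pent j = int (Suc n)"
        then have "pent m < pent j" "pent j < pent (nxt m)" using True Suc.prems by auto
        then show False using gap[of m j] by simp
      qed
    qed
    then have "a (Suc n) = - a n" using rec[of n] S_nonpent by (simp add: eq_neg_iff_add_eq_0)
    also have "\<dots> = cc m * sg (int (Suc n) - pent m)"
      using IH sg_succ[of "int n - pent m"] by (simp add: algebra_simps)
    finally show ?thesis .
  next
    case False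
    then have pm: "pent m = int (Suc n)" using Suc.prems by simp
    then have "m \<noteq> 0" by (auto simp: pent_def)
    define m' where "m' = prv m"
    have nm: "nxt m' = m" unfolding m'_def prv_def nxt_def using \<open>m \<noteq> 0\<close> by auto
    have lt: "pent m' < pent m" using nxt_gt[of m'] nm by simp
    have "pent m' \<le> int n" using lt pm by simp
    moreover have "int n < pent (nxt m')" using nm pm by simp
    ultimately have IH: "a n = cc m' * sg (int n - pent m')" using Suc.IH by blast
    have an1: "a (Suc n) = fps_nth S_fps (nat (pent m)) - a n" proof -
      have "nat (pent m) = Suc n" using pm by simp
      then show ?thesis using rec[of n] by (simp add: algebra_simps)
    qed
    show ?thesis
    proof (cases "m > 0")
      case True
      then have m': "m' = -m" unfolding m'_def prv_def by simp
      have d: "int n - pent m' = m - 1" using pm m' pent_minus[of m] by simp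
      show ?thesis using True unfolding an1 IH d unfolding m' pm[symmetric] S_pent
        by (simp add: cc_def sg_def)
    next
      case False
      then have m': "m' = -m-1" unfolding m'_def prv_def by simp
      have "pent m = pent m' + 2*m' + 1" using pent_neg[of m'] m' by simp
      then have d: "int n - pent m' = -2*m - 2" using pm m' by simp
      have "m < 0" using False \<open>m \<noteq> 0\<close> by simp
      show ?thesis using \<open>m < 0\<close> unfolding an1 IH d unfolding m' pm[symmetric] S_pent
        by (auto simp: cc_def sg_def)
    qed
  qed
qed

theorem lemma5p2:
  fixes n :: nat
  assumes "n \<ge> 1"
  shows "a n =
    (let p = pfloor (int n); r = Rp p; s = (-1::rat) ^ nat (int n - p) in
      if even r \<and> r > 0 then - s
      else if odd r \<and> r < 0 then 0
      else if odd r \<and> r > 0 then s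
      else if even r \<and> r < 0 then -2 * s
      else undefined)"
proof -
  obtain m where m: "pent m \<le> int n" "int n < pent (nxt m)" using block by blast
  have pf: "pfloor (int n) = pent m" by (rule pfloor_block[OF m])
  have "m \<noteq> 0" using m assms by (auto simp: pent_def nxt_def)
  have s: "(-1::rat) ^ nat (int n - pent m) = sg (int n - pent m)"
    using m(1) by (simp add: sg_def even_nat_iff)
  show ?thesis using \<open>m \<noteq> 0\<close> unfolding main[OF m] Let_def pf Rp_pent s
    by (auto simp: cc_def)
qed

end
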